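(* Let $n\in\mathbb N$ and let $y,z\in B_n$ with $\pi_z<\pi_y$ and $y\not\sim z$. Let $\psi_1^{(n)}$ be the nonnegative principal Dirichlet eigenvector in $B_n$ with $\|\psi_1^{(n)}\|_2=1$, and let $m_y=2\max_{x\sim y}\psi_1^{(n)}(x)$. Then $$\psi_1^{(n)}(y)\le\frac{m_y}{1-\pi_z/\pi_y}.$$
   Context: Lattice $\mathbb Z^d$, $d\ge2$, $x\sim y$ iff $|x-y|_1=1$, with positive conductances $w_{xy}=w_{yx}$ on nearest-neighbour edges. $B_n=[-n,n]^d\cap\mathbb Z^d$, $\pi_x=\sum_{y\sim x}w_{xy}$. $\mathcal E^{\boldsymbol w}(f)=\frac12\sum_x\sum_{y\sim x}w_{xy}(f(x)-f(y))^2$. The principal Dirichlet eigenvalue $\lambda_1^{(n)}=\inf\{\mathcal E^{\boldsymbol w}(f):\mathrm{supp}\,f\subseteq B_n,\|f\|_2=1\}$ is simple (Perron–Frobenius) and $\psi_1^{(n)}$ is the corresponding minimizer, supported in $B_n$, chosen nonnegative with $\|\psi_1^{(n)}\|_2=1$. *)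

theory Defs
  imports "HOL-Analysis.Analysis"
begin

text \<open>Points of Z^d are vectors int^'d; the dimension d is CARD('d).\<close>

definition l1dist :: "int ^ 'd \<Rightarrow> int ^ 'd \<Rightarrow> int" where
  "l1dist x y = (\<Sum>i\<in>UNIV. \<bar>x $ i - y $ i\<bar>)"

definition adj :: "int ^ 'd \<Rightarrow> int ^ 'd \<Rightarrow> bool" where
  "adj x y \<longleftrightarrow> l1dist x y = 1"

definition box :: "nat \<Rightarrow> (int ^ 'd) set" where
  "box n = {x. \<forall>i. \<bar>x $ i\<bar> \<le> int n}"

definition conductances :: "(int ^ 'd \<Rightarrow> int ^ 'd \<Rightarrow> real) \<Rightarrow> bool" where
  "conductances w \<longleftrightarrow> (\<forall>x y. adj x y \<longrightarrow> w x y > 0 \<and> w x y = w y x)"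

definition pi_w :: "(int ^ 'd \<Rightarrow> int ^ 'd \<Rightarrow> real) \<Rightarrow> int ^ 'd \<Rightarrow> real" where
  "pi_w w x = (\<Sum>y\<in>{y. adj x y}. w x y)"

definition energy :: "(int ^ 'd \<Rightarrow> int ^ 'd \<Rightarrow> real) \<Rightarrow> (int ^ 'd \<Rightarrow> real) \<Rightarrow> real" where
  "energy w f = (1/2) * (\<Sum>\<^sub>\<infinity>(x, y)\<in>{(x, y). adj x y}. w x y * (f x - f y)^2)"

definition l2sq :: "(int ^ 'd \<Rightarrow> real) \<Rightarrow> real" where
  "l2sq f = (\<Sum>\<^sub>\<infinity>x\<in>UNIV. (f x)^2)"

definition dirichlet_eig1 :: "(int ^ 'd \<Rightarrow> int ^ 'd \<Rightarrow> real) \<Rightarrow> nat \<Rightarrow> real" where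
  "dirichlet_eig1 w n = Inf {energy w f | f. {x. f x \<noteq> 0} \<subseteq> box n \<and> l2sq f = 1}"

definition principal_eigvec :: "(int ^ 'd \<Rightarrow> int ^ 'd \<Rightarrow> real) \<Rightarrow> nat \<Rightarrow> (int ^ 'd \<Rightarrow> real) \<Rightarrow> bool" where
  "principal_eigvec w n psi \<longleftrightarrow> {x. psi x \<noteq> 0} \<subseteq> box n \<and> l2sq psi = 1 \<and>
     (\<forall>x. psi x \<ge> 0) \<and> energy w psi = dirichlet_eig1 w n"

end

theory Submission imports Defs begin

lemma finite_box: "finite (box n :: (int^'d) set)"
proof -
  have "box n \<subseteq> vec_lambda ` (PiE (UNIV::'d set) (\<lambda>_. {-int n..int n}))"
  proof
    fix x :: "int^'d" assume "x \<in> box n"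
    hence xb: "\<bar>x $ i\<bar> \<le> int n" for i by (simp add: box_def)
    have "-int n \<le> x$i \<and> x$i \<le> int n" for i using xb[of i] by (simp add: abs_le_iff)
    hence "(\<lambda>i. x $ i) \<in> PiE UNIV (\<lambda>_. {-int n..int n})" by auto
    moreover have "x = vec_lambda (\<lambda>i. x $ i)" by simp
    ultimately show "x \<in> vec_lambda ` (PiE (UNIV::'d set) (\<lambda>_. {-int n..int n}))" by blast
  qed
  moreover have "finite (PiE (UNIV::'d set) (\<lambda>_. {-int n..int n}))" by (simp add: finite_PiE)
  ultimately show ?thesis using finite_subset by blast
qed

lemma adj_sym: "adj a b \<longleftrightarrow> adj b a"
  unfolding adj_def l1dist_def by (simp add: abs_minus_commute)

lemma adj_irrefl: "\<not> adj a a"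
  unfolding adj_def l1dist_def by simp

lemma adj_box: assumes "adj a b" "b \<in> box n" shows "a \<in> box (Suc n)"
proof -
  have "\<bar>a $ i - b $ i\<bar> \<le> 1" for i
  proof -
    have "\<bar>a $ i - b $ i\<bar> \<le> (\<Sum>j\<in>UNIV. \<bar>a $ j - b $ j\<bar>)"
      by (rule member_le_sum) auto
    thus ?thesis using assms(1) unfolding adj_def l1dist_def by simp
  qed
  note h1 = this
  have h2: "\<bar>b $ i\<bar> \<le> int n" for i using assms(2) by (simp add: box_def)
  have h3: "\<bar>a $ i\<bar> \<le> \<bar>a $ i - b $ i\<bar> + \<bar>b $ i\<bar>" for i
    using abs_triangle_ineq[of "a$i - b$i" "b$i"] by simp
  have "\<bar>a $ i\<bar> \<le> int (Suc n)" for i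
    unfolding of_nat_Suc using h1[of i] h2[of i] h3[of i] by linarith
  thus ?thesis unfolding box_def by simp
qed

lemma finite_nbr: assumes "c \<in> box n" shows "finite {b. adj c b}"
proof -
  have "{b. adj c b} \<subseteq> box (Suc n)" using adj_box adj_sym assms by blast
  thus ?thesis using finite_box finite_subset by blast
qed

lemma box_mono: assumes "c \<in> box n" shows "c \<in> box (Suc n)"
proof -
  have h: "\<bar>c $ i\<bar> \<le> int n" for i using assms by (simp add: box_def)
  have "\<bar>c $ i\<bar> \<le> int (Suc n)" for i unfolding of_nat_Suc using h[of i] by linarith
  thus ?thesis by (simp add: box_def)
qed

definition Qs :: "nat \<Rightarrow> ((int^'d) \<times> (int^'d)) set" where
  "Qs n = {(a,b). adj a b \<and> a \<in> box (Suc n) \<and> b \<in> box (Suc n)}"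

lemma finite_Qs: "finite (Qs n)"
proof -
  have "Qs n \<subseteq> box (Suc n) \<times> box (Suc n)" unfolding Qs_def by auto
  thus ?thesis using finite_box finite_subset by blast
qed

lemma energy_fin:
  fixes f :: "int^'d \<Rightarrow> real"
  assumes "{x. f x \<noteq> 0} \<subseteq> box n"
  shows "energy w f = (1/2) * (\<Sum>(a,b)\<in>Qs n. w a b * (f a - f b)^2)"
proof -
  have "(\<Sum>\<^sub>\<infinity>(x, y)\<in>{(x, y). adj x y}. w x y * (f x - f y)^2)
      = (\<Sum>\<^sub>\<infinity>(x, y)\<in>(Qs n :: ((int^'d)\<times>(int^'d)) set). w x y * (f x - f y)^2)"
  proof (rule infsum_cong_neutral)
    fix p :: "(int^'d) \<times> (int^'d)" assume p: "p \<in> {(x, y). adj x y} - Qs n"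
    obtain a b where ab: "p = (a,b)" by fastforce
    have "f a = 0 \<and> f b = 0"
    proof (cases "a \<in> box (Suc n)")
      case True
      hence "b \<notin> box (Suc n)" using p ab unfolding Qs_def by auto
      hence "b \<notin> box n" "a \<notin> box n" using adj_box[of b a n] box_mono[of b n] p ab adj_sym by auto
      thus ?thesis using assms by auto
    next
      case False
      hence "a \<notin> box n" "b \<notin> box n" using adj_box[of a b n] box_mono[of a n] p ab adj_sym by auto
      thus ?thesis using assms by auto
    qed
    thus "(case p of (x, y) \<Rightarrow> w x y * (f x - f y)^2) = 0" using ab by simp
  qed (auto simp: Qs_def)
  thus ?thesis unfolding energy_def by (simp only: infsum_finite[OF finite_Qs])
qed

lemma l2sq_fin:
  fixes f :: "int^'d \<Rightarrow> real"
  assumes "{x. f x \<noteq> 0} \<subseteq> box n"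
  shows "l2sq f = (\<Sum>x\<in>box n. (f x)^2)"
proof -
  have "l2sq f = (\<Sum>\<^sub>\<infinity>x\<in>box n. (f x)^2)" unfolding l2sq_def
    by (rule infsum_cong_neutral) (use assms in auto)
  thus ?thesis by (simp add: infsum_finite[OF finite_box])
qed

lemma energy_nonneg: assumes "conductances w" shows "energy w f \<ge> 0"
  unfolding energy_def using assms unfolding conductances_def
  by (intro mult_nonneg_nonneg infsum_nonneg) (auto intro!: mult_nonneg_nonneg simp: less_imp_le)

lemma lam_le:
  fixes f :: "int^'d \<Rightarrow> real"
  assumes "conductances w" "{x. f x \<noteq> 0} \<subseteq> box n"
  shows "dirichlet_eig1 w n * l2sq f \<le> energy w f"
proof (cases "l2sq f = 0")
  case True thus ?thesis using energy_nonneg[OF assms(1)] by simp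
next
  case False
  have L0: "l2sq f \<ge> 0" unfolding l2sq_def by (rule infsum_nonneg) simp
  with False have Lp: "l2sq f > 0" by simp
  define c where "c = 1 / sqrt (l2sq f)"
  define g where "g = (\<lambda>x. c * f x)"
  have sg: "{x. g x \<noteq> 0} \<subseteq> box n" using assms(2) unfolding g_def by auto
  have c2: "c^2 = 1 / l2sq f" using Lp unfolding c_def by (simp add: power_divide)
  have "l2sq g = c^2 * l2sq f"
    apply (simp only: l2sq_fin[OF sg] l2sq_fin[OF assms(2)])
    by (simp add: g_def sum_distrib_left power_mult_distrib)
  hence lg: "l2sq g = 1" using c2 Lp by simp
  have eg: "energy w g = c^2 * energy w f"
  proof -
    have "(\<Sum>p\<in>Qs n. (case p of (a,b) \<Rightarrow> w a b * (g a - g b)^2)) = (\<Sum>p\<in>Qs n. c^2 * (case p of (a,b) \<Rightarrow> w a b*(f a - f b)^2))"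
      by (rule sum.cong) (auto simp: g_def power2_eq_square algebra_simps)
    thus ?thesis by (simp only: energy_fin[OF sg] energy_fin[OF assms(2)] sum_distrib_left[symmetric])
  qed
  have "dirichlet_eig1 w n \<le> energy w g"
    unfolding dirichlet_eig1_def
  proof (rule cInf_lower)
    show "energy w g \<in> {energy w f |f. {x. f x \<noteq> 0} \<subseteq> box n \<and> l2sq f = 1}"
      using sg lg by blast
    show "bdd_below {energy w f |f. {x. f x \<noteq> 0} \<subseteq> box n \<and> l2sq f = 1}"
      using energy_nonneg[OF assms(1)] by (auto intro!: bdd_belowI[where m=0])
  qed
  hence "dirichlet_eig1 w n \<le> energy w f / l2sq f" using eg c2 by simp
  thus ?thesis using Lp by (simp add: field_simps)
qed

lemma sum_first:
  fixes c :: "int^'d"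
  assumes "c \<in> box n"
  shows "(\<Sum>(a,b)\<in>Qs n. if a = c then h b else 0) = (\<Sum>b\<in>{b. adj c b}. (h b :: real))"
proof -
  have "(\<Sum>p\<in>{p\<in>Qs n. fst p = c}. h (snd p)) = (\<Sum>p\<in>Qs n. if fst p = c then h (snd p) else 0)"
    by (rule sum.inter_filter[OF finite_Qs])
  hence "(\<Sum>(a,b)\<in>Qs n. if a = c then h b else 0) = (\<Sum>p\<in>Qs n \<inter> {p. fst p = c}. h (snd p))"
    by (simp add: Int_def case_prod_beta)
  also have "Qs n \<inter> {p. fst p = c} = Pair c ` {b. adj c b}"
  proof (intro equalityI subsetI)
    fix p assume "p \<in> Qs n \<inter> {p. fst p = c}" thus "p \<in> Pair c ` {b. adj c b}" by (auto simp: Qs_def)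
  next
    fix p assume "p \<in> Pair c ` {b. adj c b}"
    then obtain b where pb: "p = (c,b)" "adj c b" by auto
    moreover have "b \<in> box (Suc n)" using adj_box[of b c n] adj_sym pb assms by blast
    moreover have "c \<in> box (Suc n)" using box_mono assms by blast
    ultimately show "p \<in> Qs n \<inter> {p. fst p = c}" by (simp add: Qs_def)
  qed
  also have "(\<Sum>p\<in>Pair c ` {b. adj c b}. h (snd p)) = (\<Sum>b\<in>{b. adj c b}. h b)"
    by (subst sum.reindex) (auto simp: inj_on_def)
  finally show ?thesis .
qed

lemma sum_second:
  fixes c :: "int^'d"
  assumes "c \<in> box n"
  shows "(\<Sum>(a,b)\<in>Qs n. if b = c then h a else 0) = (\<Sum>b\<in>{b. adj c b}. (h b :: real))"
proof -
  have "(\<Sum>p\<in>{p\<in>Qs n. snd p = c}. h (fst p)) = (\<Sum>p\<in>Qs n. if snd p = c then h (fst p) else 0)"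
    by (rule sum.inter_filter[OF finite_Qs])
  hence "(\<Sum>(a,b)\<in>Qs n. if b = c then h a else 0) = (\<Sum>p\<in>Qs n \<inter> {p. snd p = c}. h (fst p))"
    by (simp add: Int_def case_prod_beta)
  also have "Qs n \<inter> {p. snd p = c} = (\<lambda>a. (a,c)) ` {b. adj c b}"
  proof (intro equalityI subsetI)
    fix p assume "p \<in> Qs n \<inter> {p. snd p = c}"
    then obtain a where "p = (a,c)" "adj a c" by (auto simp: Qs_def)
    thus "p \<in> (\<lambda>a. (a,c)) ` {b. adj c b}" using adj_sym by blast
  next
    fix p assume "p \<in> (\<lambda>a. (a,c)) ` {b. adj c b}"
    then obtain b where pb: "p = (b,c)" "adj c b" by auto
    moreover have "b \<in> box (Suc n)" using adj_box[of b c n] adj_sym pb assms by blast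
    moreover have "c \<in> box (Suc n)" using box_mono assms by blast
    ultimately show "p \<in> Qs n \<inter> {p. snd p = c}" using adj_sym[of b c] by (simp add: Qs_def)
  qed
  also have "(\<Sum>p\<in>(\<lambda>a. (a,c)) ` {b. adj c b}. h (fst p)) = (\<Sum>b\<in>{b. adj c b}. h b)"
    by (subst sum.reindex) (auto simp: inj_on_def)
  finally show ?thesis .
qed

theorem lemma5p5:
  fixes w :: "int ^ 'd \<Rightarrow> int ^ 'd \<Rightarrow> real" and n :: nat
    and y z :: "int ^ 'd" and psi :: "int ^ 'd \<Rightarrow> real"
  assumes "CARD('d) \<ge> 2"
    and "conductances w"
    and "principal_eigvec w n psi"
    and "y \<in> box n" and "z \<in> box n"
    and "pi_w w z < pi_w w y"
    and "\<not> adj y z"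
  shows "psi y \<le> (2 * Max (psi ` {x. adj x y})) / (1 - pi_w w z / pi_w w y)"
proof -
  note cond = assms(2)
  have wpos: "adj a b \<Longrightarrow> w a b > 0" for a b using cond unfolding conductances_def by blast
  have wsym: "adj a b \<Longrightarrow> w a b = w b a" for a b using cond unfolding conductances_def by blast
  define lam where "lam = dirichlet_eig1 w n"
  have supp: "{x. psi x \<noteq> 0} \<subseteq> box n" and l2: "l2sq psi = 1" and pnn: "\<And>x. psi x \<ge> 0"
    and Epsi: "energy w psi = lam"
    using assms(3) unfolding principal_eigvec_def lam_def by auto
  define N where "N = {b. adj y b}"
  have finN: "finite N" unfolding N_def using finite_nbr[OF assms(4)] .
  have piy: "pi_w w y = (\<Sum>b\<in>N. w y b)" unfolding pi_w_def N_def ..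
  have piz_nn: "pi_w w z \<ge> 0" unfolding pi_w_def
    by (rule sum_nonneg) (use wpos in \<open>auto intro: less_imp_le\<close>)
  have piy_pos: "pi_w w y > 0" using piz_nn assms(6) by linarith
  define f where "f = (\<lambda>x::int^'d. if x = z then (1::real) else 0)"
  have sf: "{x. f x \<noteq> 0} \<subseteq> box n" using assms(5) unfolding f_def by auto
  have "l2sq f = (\<Sum>x\<in>box n. (f x)^2)" by (rule l2sq_fin[OF sf])
  also have "(\<lambda>x. (f x)^2) = f" by (auto simp: f_def)
  also have "(\<Sum>x\<in>box n. f x) = 1" unfolding f_def using assms(5) by (simp add: sum.delta[OF finite_box])
  finally have lf: "l2sq f = 1" .
  have "(\<Sum>(a,b)\<in>Qs n. w a b * (f a - f b)^2) =
        (\<Sum>(a,b)\<in>Qs n. (if a = z then w z b else 0) + (if b = z then w a z else 0))"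
    by (rule sum.cong) (auto simp: f_def Qs_def adj_irrefl)
  also have "\<dots> = (\<Sum>(a,b)\<in>Qs n. (if a = z then w z b else 0)) + (\<Sum>(a,b)\<in>Qs n. (if b = z then w a z else 0))"
    by (simp add: sum.distrib case_prod_beta)
  also have "\<dots> = (\<Sum>b\<in>{b. adj z b}. w z b) + (\<Sum>b\<in>{b. adj z b}. w b z)"
    using sum_first[OF assms(5), of "\<lambda>b. w z b"] sum_second[OF assms(5), of "\<lambda>a. w a z"] by simp
  also have "(\<Sum>b\<in>{b. adj z b}. w b z) = (\<Sum>b\<in>{b. adj z b}. w z b)"
    by (rule sum.cong) (auto simp: wsym)
  finally have "energy w f = pi_w w z" unfolding energy_fin[OF sf] pi_w_def by simp
  hence lam_le_z: "lam \<le> pi_w w z" using lam_le[OF cond sf] lf unfolding lam_def by simp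
  define g where "g = psi(y := 0)"
  have sg: "{x. g x \<noteq> 0} \<subseteq> box n" using supp unfolding g_def by auto
  have "l2sq g = (\<Sum>x\<in>box n. (g x)^2)" by (rule l2sq_fin[OF sg])
  also have "\<dots> = (\<Sum>x\<in>box n - {y}. (g x)^2)"
    using sum.remove[OF finite_box assms(4), of "\<lambda>x. (g x)^2"] by (simp add: g_def)
  also have "\<dots> = (\<Sum>x\<in>box n - {y}. (psi x)^2)" by (rule sum.cong) (auto simp: g_def)
  also have "\<dots> = l2sq psi - (psi y)^2"
    using sum.remove[OF finite_box assms(4), of "\<lambda>x. (psi x)^2"] l2sq_fin[OF supp] by simp
  finally have lg: "l2sq g = 1 - (psi y)^2" using l2 by simp
  define S where "S = (\<Sum>b\<in>N. w y b * psi b)"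
  define T where "T = (\<Sum>b\<in>N. w y b * (2 * psi y * psi b - (psi y)^2))"
  have "(\<Sum>(a,b)\<in>Qs n. w a b * (g a - g b)^2) =
        (\<Sum>(a,b)\<in>Qs n. w a b * (psi a - psi b)^2 + ((if a = y then w y b * (2 * psi y * psi b - (psi y)^2) else 0)
           + (if b = y then w a y * (2 * psi y * psi a - (psi y)^2) else 0)))"
    by (rule sum.cong) (auto simp: g_def Qs_def adj_irrefl power2_eq_square algebra_simps)
  also have "\<dots> = (\<Sum>(a,b)\<in>Qs n. w a b * (psi a - psi b)^2)
       + ((\<Sum>(a,b)\<in>Qs n. (if a = y then w y b * (2 * psi y * psi b - (psi y)^2) else 0))
       + (\<Sum>(a,b)\<in>Qs n. (if b = y then w a y * (2 * psi y * psi a - (psi y)^2) else 0)))"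
    by (simp add: sum.distrib case_prod_beta)
  also have "(\<Sum>(a,b)\<in>Qs n. (if a = y then w y b * (2 * psi y * psi b - (psi y)^2) else 0)) = T"
    using sum_first[OF assms(4), of "\<lambda>b. w y b * (2 * psi y * psi b - (psi y)^2)"] unfolding T_def N_def by simp
  also have "(\<Sum>(a,b)\<in>Qs n. (if b = y then w a y * (2 * psi y * psi a - (psi y)^2) else 0)) = T"
    using sum_second[OF assms(4), of "\<lambda>a. w a y * (2 * psi y * psi a - (psi y)^2)"] unfolding T_def N_def
    by (simp add: wsym)
  finally have Eg: "energy w g = lam + T"
    unfolding energy_fin[OF sg] Epsi[symmetric] energy_fin[OF supp] by simp
  have T_eq: "T = 2 * psi y * S - (psi y)^2 * pi_w w y"
    unfolding T_def S_def piy by (simp add: sum_subtractf sum_distrib_left sum_distrib_right algebra_simps)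
  have key: "lam * (1 - (psi y)^2) \<le> lam + T" using lam_le[OF cond sg] lg Eg unfolding lam_def by simp
  define M where "M = Max (psi ` {x. adj x y})"
  have NN: "{x. adj x y} = N" unfolding N_def using adj_sym by blast
  have leM: "b \<in> N \<Longrightarrow> psi b \<le> M" for b unfolding M_def NN using finN by simp
  obtain i :: 'd where True by simp
  define b0 where "b0 = y + axis i 1"
  have "l1dist y b0 = (\<Sum>j\<in>UNIV. if j = i then 1 else 0)"
    unfolding l1dist_def b0_def by (rule sum.cong) (auto simp: axis_def)
  hence "adj y b0" unfolding adj_def by simp
  hence "psi b0 \<le> M" using leM N_def by simp
  hence M0: "M \<ge> 0" using pnn[of b0] by linarith
  have SM: "S \<le> pi_w w y * M" unfolding S_def piy sum_distrib_right
    by (rule sum_mono) (use wpos leM N_def in \<open>auto intro: mult_left_mono less_imp_le\<close>)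
  have main: "psi y * (pi_w w y - pi_w w z) \<le> 2 * M * pi_w w y"
  proof (cases "psi y = 0")
    case True thus ?thesis using M0 piy_pos by simp
  next
    case False
    hence py: "psi y > 0" using pnn[of y] by simp
    from key T_eq have "psi y * (psi y * (pi_w w y - lam)) \<le> psi y * (2 * S)"
      by (simp add: power2_eq_square algebra_simps)
    hence "psi y * (pi_w w y - lam) \<le> 2 * S" using py by simp
    moreover have "psi y * (pi_w w y - pi_w w z) \<le> psi y * (pi_w w y - lam)"
      using py lam_le_z by (intro mult_left_mono) auto
    ultimately show ?thesis using SM by (simp add: algebra_simps)
  qed
  have den: "1 - pi_w w z / pi_w w y = (pi_w w y - pi_w w z) / pi_w w y"
    using piy_pos by (simp add: field_simps)
  have dpos: "pi_w w y - pi_w w z > 0" using assms(6) by simp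
  show ?thesis unfolding M_def[symmetric] den
    using main dpos piy_pos by (simp add: field_simps)
qed

end
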